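(* Let $\hat W_k,\hat W_{k+1}\in B(\mathcal X;1)$ be fixed, $\eta$ a probability distribution on $A\setminus K$, $\tilde M\ge1$. Let $x\sim\eta$ and, conditionally on $x$, for each $a\in\mathcal A$ let $y_1^{a,1},\dots,y_1^{a,\tilde M}$ and $y_2^{a,1},\dots,y_2^{a,\tilde M}$ be mutually independent i.i.d. draws from $T(\cdot\mid x,a)$. For $\alpha=1,2$ define $\hat{\mathsf T}^a_\alpha\hat W_{k+1}(x)=\frac1{\tilde M}\sum_{j=1}^{\tilde M}[\mathbf 1_K(y_\alpha^{a,j})+\mathbf 1_{A\setminus K}(y_\alpha^{a,j})\hat W_{k+1}(y_\alpha^{a,j})]$. Then $$\|\hat W_k-\mathsf T\hat W_{k+1}\|_{1,\eta}\le\mathbf E\Big[\big|\hat W_k(x)-\max_{a\in\mathcal A}\hat{\mathsf T}^a_1\hat W_{k+1}(x)\big|\Big]+\mathbf E\Big[\max_{a\in\mathcal A}\big|\hat{\mathsf T}^a_1\hat W_{k+1}(x)-\hat{\mathsf T}^a_2\hat W_{k+1}(x)\big|\Big].$$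
   Context: Controlled Markov process on $\mathcal X\subset\mathbb R^n$, finite action set $\mathcal A$, kernel $T(\cdot\mid x,a)$; Borel safe set $A$ and target set $K$. $B(\mathcal X;1)$: measurable functions $\mathcal X\to[0,1]$. $(\mathsf TW)(x)=\max_{a}\mathbf E[\mathbf 1_K(y)+\mathbf 1_{A\setminus K}(y)W(y)]$, $y\sim T(\cdot\mid x,a)$. $\|f\|_{1,\eta}=\int_{A\setminus K}|f|\,d\eta$. *)

theory Defs
  imports "HOL-Probability.Probability"
begin

definition state_space :: "(real ^ 'n) set \<Rightarrow> (real ^ 'n) measure" where
  "state_space X = restrict_space borel X"

definition B1 :: "(real ^ 'n) set \<Rightarrow> ((real ^ 'n) \<Rightarrow> real) set" where
  "B1 X = {W. W \<in> borel_measurable (state_space X) \<and> (\<forall>x\<in>X. 0 \<le> W x \<and> W x \<le> 1)}"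

definition ra_payoff :: "(real ^ 'n) set \<Rightarrow> (real ^ 'n) set \<Rightarrow> ((real ^ 'n) \<Rightarrow> real) \<Rightarrow> (real ^ 'n) \<Rightarrow> real" where
  "ra_payoff A K W y = indicator K y + indicator (A - K) y * W y"

definition bellman :: "((real ^ 'n) \<Rightarrow> 'a::finite \<Rightarrow> (real ^ 'n) measure) \<Rightarrow> (real ^ 'n) set \<Rightarrow> (real ^ 'n) set
     \<Rightarrow> ((real ^ 'n) \<Rightarrow> real) \<Rightarrow> (real ^ 'n) \<Rightarrow> real" where
  "bellman T A K W x = (MAX a\<in>UNIV. \<integral>y. ra_payoff A K W y \<partial>(T x a))"

definition norm1 :: "(real ^ 'n) measure \<Rightarrow> (real ^ 'n) set \<Rightarrow> (real ^ 'n) set \<Rightarrow> ((real ^ 'n) \<Rightarrow> real) \<Rightarrow> real" where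
  "norm1 \<eta> A K f = (LINT x:(A - K)|\<eta>. \<bar>f x\<bar>)"

text \<open>Empirical operator: draws are indexed by (a, alpha, j), alpha in {1,2}, j in {1..M}.\<close>
definition emp_op :: "nat \<Rightarrow> (real ^ 'n) set \<Rightarrow> (real ^ 'n) set \<Rightarrow> ((real ^ 'n) \<Rightarrow> real)
     \<Rightarrow> ('a \<times> nat \<times> nat \<Rightarrow> real ^ 'n) \<Rightarrow> nat \<Rightarrow> 'a \<Rightarrow> real" where
  "emp_op M A K W ys \<alpha> a = (1 / real M) * (\<Sum>j=1..M. ra_payoff A K W (ys (a, \<alpha>, j)))"

definition sample_law :: "((real ^ 'n) \<Rightarrow> 'a::finite \<Rightarrow> (real ^ 'n) measure) \<Rightarrow> nat \<Rightarrow> (real ^ 'n)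
     \<Rightarrow> ('a \<times> nat \<times> nat \<Rightarrow> real ^ 'n) measure" where
  "sample_law T M x = PiM (UNIV \<times> {1, 2} \<times> {1..M}) (\<lambda>i. T x (fst i))"

end

theory Submission
  imports Defs
begin

lemma space_ss: "space (state_space X) = X"
  by (simp add: state_space_def space_restrict_space)

lemma kernel_facts:
  assumes T_kernel: "(\<lambda>x. T x b) \<in> state_space X \<rightarrow>\<^sub>M prob_algebra (state_space X)"
    and x: "x \<in> X"
  shows "sets (T x b) = sets (state_space X)" "prob_space (T x b)"
  using measurable_space[OF T_kernel, of x] x by (auto simp: space_prob_algebra space_ss)

lemma kernel_meas:
  fixes T :: "real ^ 'n \<Rightarrow> 'a \<Rightarrow> (real ^ 'n) measure" and I :: "('a \<times> 'b) set"
  assumes T_kernel: "\<And>a. (\<lambda>x. T x a) \<in> state_space X \<rightarrow>\<^sub>M prob_algebra (state_space X)"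
    and fin: "finite I"
  shows "(\<lambda>x. PiM I (\<lambda>i. T x (fst i))) \<in> state_space X \<rightarrow>\<^sub>M prob_algebra (PiM I (\<lambda>i. state_space X))"
proof (rule measurable_prob_algebra_generated[where \<Omega>="PiE I (\<lambda>i. space (state_space X))" and G="prod_algebra I (\<lambda>i. state_space X)"])
  show "sets (PiM I (\<lambda>i. state_space X)) = sigma_sets (PiE I (\<lambda>i. space (state_space X))) (prod_algebra I (\<lambda>i. state_space X))"
    by (rule sets_PiM)
  show "Int_stable (prod_algebra I (\<lambda>i. state_space X))" by (rule Int_stable_prod_algebra)
  show "prod_algebra I (\<lambda>i. state_space X) \<subseteq> Pow (PiE I (\<lambda>i. space (state_space X)))"
    by (rule prod_algebra_sets_into_space)
next
  fix x assume x: "x \<in> space (state_space X)"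
  then have x': "x \<in> X" by (simp add: space_ss)
  interpret PS: product_prob_space "\<lambda>i. T x (fst i)" I
    by (auto simp: product_prob_space_def product_prob_space_axioms_def product_sigma_finite_def
        kernel_facts[where T=T, OF T_kernel x'] prob_space_imp_sigma_finite)
  show "prob_space (PiM I (\<lambda>i. T x (fst i)))" by (rule PS.P.prob_space_axioms)
  show "sets (PiM I (\<lambda>i. T x (fst i))) = sets (PiM I (\<lambda>i. state_space X))"
    by (rule sets_PiM_cong) (auto simp: kernel_facts[where T=T, OF T_kernel x'])
next
  fix E assume "E \<in> prod_algebra I (\<lambda>i. state_space X)"
  then obtain F where E: "E = PiE I F" and F: "F \<in> (\<Pi> j\<in>I. sets (state_space X))"
    by (auto simp: prod_algebra_eq_finite[OF fin])
  have "(\<lambda>x. \<Prod>i\<in>I. emeasure (T x (fst i)) (F i)) \<in> borel_measurable (state_space X)"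
  proof (rule borel_measurable_prod_ennreal)
    fix i assume "i \<in> I"
    then show "(\<lambda>x. emeasure (T x (fst i)) (F i)) \<in> borel_measurable (state_space X)"
      using F by (intro measurable_compose[OF measurable_prob_algebraD[OF T_kernel] measurable_emeasure_subprob_algebra]) auto
  qed
  then show "(\<lambda>x. emeasure (PiM I (\<lambda>i. T x (fst i))) E) \<in> borel_measurable (state_space X)"
  proof (rule measurable_cong[THEN iffD1, rotated])
    fix x assume x: "x \<in> space (state_space X)"
    then have x': "x \<in> X" by (simp add: space_ss)
    interpret PS: product_prob_space "\<lambda>i. T x (fst i)" I
      by (auto simp: product_prob_space_def product_prob_space_axioms_def product_sigma_finite_def
          kernel_facts[where T=T, OF T_kernel x'] prob_space_imp_sigma_finite)
    show "(\<Prod>i\<in>I. emeasure (T x (fst i)) (F i)) = emeasure (PiM I (\<lambda>i. T x (fst i))) E"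
      unfolding E using F by (subst PS.emeasure_PiM[OF fin]) (auto simp: kernel_facts[where T=T, OF T_kernel x'])
  qed
qed


lemma Max_diff_le:
  fixes f g :: "'a::finite \<Rightarrow> real"
  shows "\<bar>(MAX a\<in>UNIV. f a) - (MAX a\<in>UNIV. g a)\<bar> \<le> (MAX a\<in>UNIV. \<bar>f a - g a\<bar>)"
proof -
  have "f a \<le> (MAX a\<in>UNIV. g a) + (MAX a\<in>UNIV. \<bar>f a - g a\<bar>)" for a
  proof -
    have "g a \<le> (MAX a\<in>UNIV. g a)" "\<bar>f a - g a\<bar> \<le> (MAX a\<in>UNIV. \<bar>f a - g a\<bar>)" by auto
    then show ?thesis by linarith
  qed
  then have 1: "(MAX a\<in>UNIV. f a) \<le> (MAX a\<in>UNIV. g a) + (MAX a\<in>UNIV. \<bar>f a - g a\<bar>)"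
    by (intro Max.boundedI) auto
  have "g a \<le> (MAX a\<in>UNIV. f a) + (MAX a\<in>UNIV. \<bar>f a - g a\<bar>)" for a
  proof -
    have "f a \<le> (MAX a\<in>UNIV. f a)" "\<bar>f a - g a\<bar> \<le> (MAX a\<in>UNIV. \<bar>f a - g a\<bar>)" by auto
    then show ?thesis by linarith
  qed
  then have 2: "(MAX a\<in>UNIV. g a) \<le> (MAX a\<in>UNIV. f a) + (MAX a\<in>UNIV. \<bar>f a - g a\<bar>)"
    by (intro Max.boundedI) auto
  from 1 2 show ?thesis by linarith
qed

lemma Max_nonneg:
  fixes f :: "'a::finite \<Rightarrow> real"
  assumes "\<And>a. 0 \<le> f a"
  shows "0 \<le> (MAX a\<in>UNIV. f a)"
proof -
  have "f undefined \<le> (MAX a\<in>UNIV. f a)" by simp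
  with assms[of undefined] show ?thesis by linarith
qed

lemma core:
  fixes t1 :: "'a::finite \<Rightarrow> 'u \<Rightarrow> real" and t2 :: "'a \<Rightarrow> 'v \<Rightarrow> real" and w :: real
  assumes Q1: "prob_space Q1" and Q2: "prob_space Q2"
    and t1m[measurable]: "\<And>a. t1 a \<in> borel_measurable Q1"
    and t2m[measurable]: "\<And>a. t2 a \<in> borel_measurable Q2"
    and b1: "\<And>a u. 0 \<le> t1 a u \<and> t1 a u \<le> 1"
    and b2: "\<And>a v. 0 \<le> t2 a v \<and> t2 a v \<le> 1"
  shows "\<bar>w - (MAX a\<in>UNIV. \<integral>v. t2 a v \<partial>Q2)\<bar>
     \<le> (\<integral>u. \<bar>w - (MAX a\<in>UNIV. t1 a u)\<bar> \<partial>Q1) + (\<integral>u. (\<integral>v. (MAX a\<in>UNIV. \<bar>t1 a u - t2 a v\<bar>) \<partial>Q2) \<partial>Q1)"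
proof -
  interpret Q1: prob_space Q1 by fact
  interpret Q2: prob_space Q2 by fact
  interpret Q12: pair_prob_space Q1 Q2 by unfold_locales
  define h where "h u = (\<integral>v. (MAX a\<in>UNIV. \<bar>t1 a u - t2 a v\<bar>) \<partial>Q2)" for u
  define c where "c a = (\<integral>v. t2 a v \<partial>Q2)" for a
  have jm: "(\<lambda>(u,v). (MAX a\<in>UNIV. \<bar>t1 a u - t2 a v\<bar>)) \<in> borel_measurable (Q1 \<Otimes>\<^sub>M Q2)"
    by measurable
  have hm: "h \<in> borel_measurable Q1"
    unfolding h_def using jm by (intro Q2.borel_measurable_lebesgue_integral) simp
  have int2: "integrable Q2 (t2 a)" for a
    using b2 by (intro Q2.integrable_const_bound[where B=1]) auto
  have intd: "integrable Q2 (\<lambda>v. \<bar>t1 a u - t2 a v\<bar>)" for a u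
  proof (intro Q2.integrable_const_bound[where B=1] AE_I2)
    fix v show "norm \<bar>t1 a u - t2 a v\<bar> \<le> 1" using b1[of a u] b2[of a v] by (auto simp: abs_le_iff)
  qed measurable
  have intM: "integrable Q2 (\<lambda>v. MAX a\<in>UNIV. \<bar>t1 a u - t2 a v\<bar>)" for u
  proof (intro Q2.integrable_const_bound[where B=1])
    show "AE v in Q2. norm (MAX a\<in>UNIV. \<bar>t1 a u - t2 a v\<bar>) \<le> 1"
    proof (intro AE_I2)
      fix v
      have "\<bar>t1 a u - t2 a v\<bar> \<le> 1" for a using b1[of a u] b2[of a v] by (auto simp: abs_le_iff)
      then have "(MAX a\<in>UNIV. \<bar>t1 a u - t2 a v\<bar>) \<le> 1" by (intro Max.boundedI) auto
      moreover have "0 \<le> (MAX a\<in>UNIV. \<bar>t1 a u - t2 a v\<bar>)"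
        by (rule Max_nonneg) simp
      ultimately show "norm (MAX a\<in>UNIV. \<bar>t1 a u - t2 a v\<bar>) \<le> 1" by simp
    qed
  qed measurable
  have key: "\<bar>(MAX a\<in>UNIV. t1 a u) - (MAX a\<in>UNIV. c a)\<bar> \<le> h u" for u
  proof -
    have "\<bar>t1 a u - c a\<bar> \<le> h u" for a
    proof -
      have "\<bar>t1 a u - c a\<bar> = \<bar>\<integral>v. (t1 a u - t2 a v) \<partial>Q2\<bar>"
        unfolding c_def using int2 by (simp add: Q2.prob_space)
      also have "\<dots> \<le> (\<integral>v. \<bar>t1 a u - t2 a v\<bar> \<partial>Q2)" by (rule integral_abs_bound)
      also have "\<dots> \<le> h u" unfolding h_def
        by (intro integral_mono intd intM) auto
      finally show ?thesis .
    qed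
    then have "(MAX a\<in>UNIV. \<bar>t1 a u - c a\<bar>) \<le> h u" by (intro Max.boundedI) auto
    then show ?thesis using Max_diff_le[of "\<lambda>a. t1 a u" c] by linarith
  qed
  have int_a: "integrable Q1 (\<lambda>u. \<bar>w - (MAX a\<in>UNIV. t1 a u)\<bar>)"
  proof (intro Q1.integrable_const_bound[where B="\<bar>w\<bar> + 1"])
    show "AE u in Q1. norm \<bar>w - (MAX a\<in>UNIV. t1 a u)\<bar> \<le> \<bar>w\<bar> + 1"
    proof (intro AE_I2)
      fix u
      have "(MAX a\<in>UNIV. t1 a u) \<le> 1" using b1 by (intro Max.boundedI) auto
      moreover have "0 \<le> (MAX a\<in>UNIV. t1 a u)"
        using b1 by (intro Max_nonneg) auto
      ultimately have "\<bar>w - (MAX a\<in>UNIV. t1 a u)\<bar> \<le> \<bar>w\<bar> + 1" by linarith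
      then show "norm \<bar>w - (MAX a\<in>UNIV. t1 a u)\<bar> \<le> \<bar>w\<bar> + 1" by simp
    qed
  qed measurable
  have int_h: "integrable Q1 h"
  proof (intro Q1.integrable_const_bound[where B=1] hm AE_I2)
    fix u
    have "norm (h u) \<le> (\<integral>v. norm (MAX a\<in>UNIV. \<bar>t1 a u - t2 a v\<bar>) \<partial>Q2)"
      unfolding h_def by (rule integral_norm_bound)
    also have "\<dots> \<le> (\<integral>v. 1 \<partial>Q2)"
    proof (intro integral_mono)
      show "integrable Q2 (\<lambda>v. norm (MAX a\<in>UNIV. \<bar>t1 a u - t2 a v\<bar>))" using intM by auto
      fix v
      have "\<bar>t1 a u - t2 a v\<bar> \<le> 1" for a using b1[of a u] b2[of a v] by (auto simp: abs_le_iff)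
      then have "(MAX a\<in>UNIV. \<bar>t1 a u - t2 a v\<bar>) \<le> 1" by (intro Max.boundedI) auto
      moreover have "0 \<le> (MAX a\<in>UNIV. \<bar>t1 a u - t2 a v\<bar>)"
        by (rule Max_nonneg) simp
      ultimately show "norm (MAX a\<in>UNIV. \<bar>t1 a u - t2 a v\<bar>) \<le> 1" by simp
    qed auto
    also have "\<dots> = 1" by (simp add: Q2.prob_space)
    finally show "norm (h u) \<le> 1" .
  qed
  have "\<bar>w - (MAX a\<in>UNIV. c a)\<bar> = (\<integral>u. \<bar>w - (MAX a\<in>UNIV. c a)\<bar> \<partial>Q1)"
    by (simp add: Q1.prob_space)
  also have "\<dots> \<le> (\<integral>u. \<bar>w - (MAX a\<in>UNIV. t1 a u)\<bar> + h u \<partial>Q1)"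
  proof (intro integral_mono)
    show "integrable Q1 (\<lambda>u. \<bar>w - (MAX a\<in>UNIV. t1 a u)\<bar> + h u)" using int_a int_h by auto
    fix u show "\<bar>w - (MAX a\<in>UNIV. c a)\<bar> \<le> \<bar>w - (MAX a\<in>UNIV. t1 a u)\<bar> + h u"
      using key[of u] by linarith
  qed auto
  also have "\<dots> = (\<integral>u. \<bar>w - (MAX a\<in>UNIV. t1 a u)\<bar> \<partial>Q1) + (\<integral>u. h u \<partial>Q1)"
    using Bochner_Integration.integral_add[OF int_a int_h] by simp
  finally show ?thesis unfolding h_def c_def .
qed

lemma payoff_bounds:
  assumes "A \<subseteq> X" "\<And>x. x \<in> X \<Longrightarrow> 0 \<le> W x \<and> W x \<le> 1"
  shows "0 \<le> ra_payoff A K W y \<and> ra_payoff A K W y \<le> 1"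
  using assms by (auto simp: ra_payoff_def indicator_def)

lemma emp_bounds:
  assumes "A \<subseteq> X" "\<And>x. x \<in> X \<Longrightarrow> 0 \<le> W x \<and> W x \<le> 1" "M \<ge> 1"
  shows "0 \<le> emp_op M A K W ys \<alpha> a \<and> emp_op M A K W ys \<alpha> a \<le> 1"
proof -
  have "(\<Sum>j=1..M. ra_payoff A K W (ys (a, \<alpha>, j))) \<le> (\<Sum>j=1..M. 1)"
    using payoff_bounds[OF assms(1,2)] by (intro sum_mono) auto
  moreover have "0 \<le> (\<Sum>j=1..M. ra_payoff A K W (ys (a, \<alpha>, j)))"
    using payoff_bounds[OF assms(1,2)] by (intro sum_nonneg) auto
  ultimately show ?thesis using assms(3) unfolding emp_op_def
    by (auto simp: field_simps)
qed

lemma payoff_meas: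
  assumes "sets R = sets (state_space X)" "A \<in> sets (state_space X)" "K \<in> sets (state_space X)"
    "W \<in> borel_measurable (state_space X)"
  shows "ra_payoff A K W \<in> borel_measurable R"
proof -
  have "ra_payoff A K W \<in> borel_measurable (state_space X)"
    unfolding ra_payoff_def using assms(2-4) by measurable
  then show ?thesis using measurable_cong_sets[OF assms(1) refl] by blast
qed

lemma emp_meas:
  assumes "\<And>i. i \<in> I \<Longrightarrow> sets (N i) = sets (state_space X)" "A \<in> sets (state_space X)" "K \<in> sets (state_space X)"
    "W \<in> borel_measurable (state_space X)" "\<And>j. j \<in> {1..M} \<Longrightarrow> (a, \<alpha>, j) \<in> I"
  shows "(\<lambda>ys. emp_op M A K W ys \<alpha> a) \<in> borel_measurable (PiM I N)"
  unfolding emp_op_def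
proof (intro borel_measurable_times borel_measurable_const borel_measurable_sum)
  fix j assume j: "j \<in> {1..M}"
  show "(\<lambda>ys. ra_payoff A K W (ys (a, \<alpha>, j))) \<in> borel_measurable (PiM I N)"
    by (rule measurable_compose[OF measurable_component_singleton[OF assms(5)[OF j], where M=N]
          payoff_meas[OF assms(1)[OF assms(5)[OF j]] assms(2-4)]])
qed

lemma fub:
  fixes F :: "_ \<Rightarrow> real"
  assumes N: "\<And>i. prob_space (N i)" and IJ: "I \<inter> J = {}" "finite I" "finite J"
    and Fm: "F \<in> borel_measurable (PiM (I \<union> J) N)" and Fb: "\<And>y. \<bar>F y\<bar> \<le> B"
  shows "(\<integral>y. F y \<partial>PiM (I \<union> J) N) = (\<integral>u. (\<integral>v. F (merge I J (u, v)) \<partial>PiM J N) \<partial>PiM I N)"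
proof -
  interpret PI: product_prob_space N I
    using N by (auto simp: product_prob_space_def product_prob_space_axioms_def product_sigma_finite_def
        prob_space_imp_sigma_finite)
  interpret PJ: product_prob_space N J
    using N by (auto simp: product_prob_space_def product_prob_space_axioms_def product_sigma_finite_def
        prob_space_imp_sigma_finite)
  interpret PIJ: pair_prob_space "PiM I N" "PiM J N"
    by (simp add: pair_prob_space_def PI.P.prob_space_axioms PJ.P.prob_space_axioms
        pair_sigma_finite_def prob_space_imp_sigma_finite)
  have "(\<integral>y. F y \<partial>PiM (I \<union> J) N) = (\<integral>y. F y \<partial>distr (PiM I N \<Otimes>\<^sub>M PiM J N) (PiM (I \<union> J) N) (merge I J))"
    using PI.distr_merge[OF IJ] by simp
  also have "\<dots> = (\<integral>z. F (merge I J z) \<partial>(PiM I N \<Otimes>\<^sub>M PiM J N))"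
    by (rule integral_distr[OF measurable_merge Fm])
  also have "\<dots> = (\<integral>u. (\<integral>v. F (merge I J (u, v)) \<partial>PiM J N) \<partial>PiM I N)"
  proof (rule PIJ.integral_fst'[symmetric])
    show "integrable (PiM I N \<Otimes>\<^sub>M PiM J N) (\<lambda>z. F (merge I J z))"
      using Fb by (intro PIJ.P.integrable_const_bound[where B=B] AE_I2 measurable_compose[OF measurable_merge Fm]) auto
  qed
  finally show ?thesis .
qed

lemma ptwise:
  fixes T :: "real ^ 'n \<Rightarrow> 'a::finite \<Rightarrow> (real ^ 'n) measure" and w :: real
  assumes A_meas: "A \<in> sets (state_space X)"
    and K_meas: "K \<in> sets (state_space X)"
    and T_kernel: "\<And>a. (\<lambda>x. T x a) \<in> state_space X \<rightarrow>\<^sub>M prob_algebra (state_space X)"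
    and Wk1_B: "Wk1 \<in> B1 X"
    and M_pos: "M \<ge> 1"
    and x: "x \<in> X"
  shows "\<bar>w - bellman T A K Wk1 x\<bar>
     \<le> (\<integral>ys. \<bar>w - (MAX a\<in>UNIV. emp_op M A K Wk1 ys 1 a)\<bar> \<partial>(sample_law T M x))
      + (\<integral>ys. (MAX a\<in>UNIV. \<bar>emp_op M A K Wk1 ys 1 a - emp_op M A K Wk1 ys 2 a\<bar>) \<partial>(sample_law T M x))"
proof -
  define N where "N i = T x (fst i)" for i :: "'a \<times> nat \<times> nat"
  define I1 where "I1 = (UNIV :: 'a set) \<times> {1::nat} \<times> {1..M}"
  define I2 where "I2 = (UNIV :: 'a set) \<times> {2::nat} \<times> {1..M}"
  have IJ: "I1 \<inter> I2 = {}" "finite I1" "finite I2" by (auto simp: I1_def I2_def)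
  have sl: "sample_law T M x = PiM (I1 \<union> I2) N"
    unfolding sample_law_def N_def I1_def I2_def
    by (rule arg_cong2[where f="\<lambda>I M. PiM I M"]) auto
  have Nsets: "sets (N i) = sets (state_space X)" and Nprob: "prob_space (N i)" for i
    unfolding N_def using kernel_facts[where T=T and b="fst i", OF T_kernel x] by auto
  have AX: "A \<subseteq> X" using sets.sets_into_space[OF A_meas] by (simp add: space_ss)
  have Wb: "\<And>y. y \<in> X \<Longrightarrow> 0 \<le> Wk1 y \<and> Wk1 y \<le> 1" and Wm: "Wk1 \<in> borel_measurable (state_space X)"
    using Wk1_B by (auto simp: B1_def)
  have eb: "0 \<le> emp_op M A K Wk1 ys \<alpha> a \<and> emp_op M A K Wk1 ys \<alpha> a \<le> 1" for ys \<alpha> a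
    by (rule emp_bounds[OF AX _ M_pos]) (use Wb in auto)
  define t1 where "t1 (a::'a) u = emp_op M A K Wk1 u 1 a" for a u
  define t2 where "t2 (a::'a) v = emp_op M A K Wk1 v 2 a" for a v
  have t1m: "t1 a \<in> borel_measurable (PiM I1 N)" for a
    unfolding t1_def by (rule emp_meas[OF Nsets A_meas K_meas Wm]) (auto simp: I1_def)
  have t2m: "t2 a \<in> borel_measurable (PiM I2 N)" for a
    unfolding t2_def by (rule emp_meas[OF Nsets A_meas K_meas Wm]) (auto simp: I2_def)
  interpret P2: product_prob_space N I2
    using Nprob by (auto simp: product_prob_space_def product_prob_space_axioms_def product_sigma_finite_def
        prob_space_imp_sigma_finite)
  have c_eq: "(\<integral>y. ra_payoff A K Wk1 y \<partial>T x a) = (\<integral>v. t2 a v \<partial>PiM I2 N)" for a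
  proof -
    have pm: "ra_payoff A K Wk1 \<in> borel_measurable (N i)" for i
      by (rule payoff_meas[OF Nsets A_meas K_meas Wm])
    have comp: "(\<integral>v. ra_payoff A K Wk1 (v (a, 2, j)) \<partial>PiM I2 N) = (\<integral>y. ra_payoff A K Wk1 y \<partial>T x a)"
      if j: "j \<in> {1..M}" for j
    proof -
      have i: "(a, 2, j) \<in> I2" using j by (simp add: I2_def)
      have "(\<integral>y. ra_payoff A K Wk1 y \<partial>T x a) = (\<integral>y. ra_payoff A K Wk1 y \<partial>distr (PiM I2 N) (N (a,2,j)) (\<lambda>\<omega>. \<omega> (a,2,j)))"
        using P2.PiM_component[OF i] by (simp add: N_def)
      also have "\<dots> = (\<integral>v. ra_payoff A K Wk1 (v (a, 2, j)) \<partial>PiM I2 N)"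
        by (rule integral_distr[OF measurable_component_singleton[OF i] pm])
      finally show ?thesis by simp
    qed
    have intj: "integrable (PiM I2 N) (\<lambda>v. ra_payoff A K Wk1 (v (a, 2, j)))" if j: "j \<in> {1..M}" for j
    proof (intro P2.P.integrable_const_bound[where B=1] AE_I2)
      have i: "(a, 2, j) \<in> I2" using j by (simp add: I2_def)
      show "(\<lambda>v. ra_payoff A K Wk1 (v (a, 2, j))) \<in> borel_measurable (PiM I2 N)"
        by (rule measurable_compose[OF measurable_component_singleton[OF i, where M=N] pm])
      fix v show "norm (ra_payoff A K Wk1 (v (a, 2, j))) \<le> 1"
        using payoff_bounds[OF AX Wb] by (auto simp: abs_le_iff)
    qed
    have "(\<integral>v. t2 a v \<partial>PiM I2 N) = (1 / real M) * (\<Sum>j=1..M. \<integral>v. ra_payoff A K Wk1 (v (a, 2, j)) \<partial>PiM I2 N)"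
      unfolding t2_def emp_op_def using intj by (simp add: Bochner_Integration.integral_sum)
    also have "\<dots> = (1 / real M) * (\<Sum>j=1..M. \<integral>y. ra_payoff A K Wk1 y \<partial>T x a)"
      using comp by simp
    also have "\<dots> = (\<integral>y. ra_payoff A K Wk1 y \<partial>T x a)" using M_pos by simp
    finally show ?thesis by simp
  qed
  have bell: "bellman T A K Wk1 x = (MAX a\<in>UNIV. \<integral>v. t2 a v \<partial>PiM I2 N)"
    unfolding bellman_def using c_eq by simp
  have main: "\<bar>w - bellman T A K Wk1 x\<bar> \<le> (\<integral>u. \<bar>w - (MAX a\<in>UNIV. t1 a u)\<bar> \<partial>PiM I1 N)
      + (\<integral>u. (\<integral>v. (MAX a\<in>UNIV. \<bar>t1 a u - t2 a v\<bar>) \<partial>PiM I2 N) \<partial>PiM I1 N)"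
    unfolding bell
    by (rule core[OF _ _ t1m t2m]) (auto simp: t1_def t2_def eb prob_space_PiM Nprob)
  have em1[measurable]: "(\<lambda>ys. emp_op M A K Wk1 ys 1 a) \<in> borel_measurable (PiM (I1 \<union> I2) N)" for a
    by (rule emp_meas[OF Nsets A_meas K_meas Wm]) (auto simp: I1_def)
  have em2[measurable]: "(\<lambda>ys. emp_op M A K Wk1 ys 2 a) \<in> borel_measurable (PiM (I1 \<union> I2) N)" for a
    by (rule emp_meas[OF Nsets A_meas K_meas Wm]) (auto simp: I2_def)
  have mg1: "emp_op M A K Wk1 (merge I1 I2 (u, v)) 1 a = t1 a u" for a u v
    unfolding t1_def emp_op_def using IJ(1) by (intro arg_cong[where f="\<lambda>s. 1 / real M * s"] sum.cong refl) (auto simp: I1_def)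
  have mg2: "emp_op M A K Wk1 (merge I1 I2 (u, v)) 2 a = t2 a v" for a u v
    unfolding t2_def emp_op_def using IJ(1) by (intro arg_cong[where f="\<lambda>s. 1 / real M * s"] sum.cong refl) (auto simp: I2_def)
  have mg1': "emp_op M A K Wk1 (merge I1 I2 (u, v)) 1 = (\<lambda>a. t1 a u)" for u v
    by (rule ext) (rule mg1)
  have mg2': "emp_op M A K Wk1 (merge I1 I2 (u, v)) 2 = (\<lambda>a. t2 a v)" for u v
    by (rule ext) (rule mg2)
  have Mb: "0 \<le> (MAX a\<in>UNIV. f a) \<and> (MAX a\<in>UNIV. f a) \<le> 1" if "\<And>a. 0 \<le> f a \<and> f a \<le> (1::real)" for f :: "'a \<Rightarrow> real"
    using that by (auto intro!: Max_nonneg Max.boundedI)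
  have g1: "(\<integral>ys. \<bar>w - (MAX a\<in>UNIV. emp_op M A K Wk1 ys 1 a)\<bar> \<partial>(sample_law T M x))
      = (\<integral>u. \<bar>w - (MAX a\<in>UNIV. t1 a u)\<bar> \<partial>PiM I1 N)"
  proof -
    have "(\<integral>ys. \<bar>w - (MAX a\<in>UNIV. emp_op M A K Wk1 ys 1 a)\<bar> \<partial>(sample_law T M x))
      = (\<integral>u. (\<integral>v. \<bar>w - (MAX a\<in>UNIV. emp_op M A K Wk1 (merge I1 I2 (u, v)) 1 a)\<bar> \<partial>PiM I2 N) \<partial>PiM I1 N)"
      unfolding sl
    proof (rule fub[OF Nprob IJ, where B="\<bar>w\<bar> + 1"])
      fix ys :: "'a \<times> nat \<times> nat \<Rightarrow> real ^ 'n"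
      have "0 \<le> (MAX a\<in>UNIV. emp_op M A K Wk1 ys 1 a) \<and> (MAX a\<in>UNIV. emp_op M A K Wk1 ys 1 a) \<le> 1"
        by (rule Mb[of "\<lambda>a. emp_op M A K Wk1 ys 1 a"], rule eb)
      then show "\<bar>\<bar>w - (MAX a\<in>UNIV. emp_op M A K Wk1 ys 1 a)\<bar>\<bar> \<le> \<bar>w\<bar> + 1" by linarith
    qed measurable
    also have "\<dots> = (\<integral>u. \<bar>w - (MAX a\<in>UNIV. t1 a u)\<bar> \<partial>PiM I1 N)"
      unfolding mg1' by (simp add: P2.P.prob_space)
    finally show ?thesis .
  qed
  have g2: "(\<integral>ys. (MAX a\<in>UNIV. \<bar>emp_op M A K Wk1 ys 1 a - emp_op M A K Wk1 ys 2 a\<bar>) \<partial>(sample_law T M x))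
      = (\<integral>u. (\<integral>v. (MAX a\<in>UNIV. \<bar>t1 a u - t2 a v\<bar>) \<partial>PiM I2 N) \<partial>PiM I1 N)"
  proof -
    have "(\<integral>ys. (MAX a\<in>UNIV. \<bar>emp_op M A K Wk1 ys 1 a - emp_op M A K Wk1 ys 2 a\<bar>) \<partial>(sample_law T M x))
      = (\<integral>u. (\<integral>v. (MAX a\<in>UNIV. \<bar>emp_op M A K Wk1 (merge I1 I2 (u, v)) 1 a - emp_op M A K Wk1 (merge I1 I2 (u, v)) 2 a\<bar>) \<partial>PiM I2 N) \<partial>PiM I1 N)"
      unfolding sl
    proof (rule fub[OF Nprob IJ, where B=1])
      fix ys :: "'a \<times> nat \<times> nat \<Rightarrow> real ^ 'n"
      have "0 \<le> (MAX a\<in>UNIV. \<bar>emp_op M A K Wk1 ys 1 a - emp_op M A K Wk1 ys 2 a\<bar>) \<and> (MAX a\<in>UNIV. \<bar>emp_op M A K Wk1 ys 1 a - emp_op M A K Wk1 ys 2 a\<bar>) \<le> 1"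
      proof (rule Mb)
        fix a show "0 \<le> \<bar>emp_op M A K Wk1 ys 1 a - emp_op M A K Wk1 ys 2 a\<bar> \<and> \<bar>emp_op M A K Wk1 ys 1 a - emp_op M A K Wk1 ys 2 a\<bar> \<le> 1"
          using eb[of ys 1 a] eb[of ys 2 a] by (auto simp: abs_le_iff)
      qed
      then show "\<bar>MAX a\<in>UNIV. \<bar>emp_op M A K Wk1 ys 1 a - emp_op M A K Wk1 ys 2 a\<bar>\<bar> \<le> 1" by linarith
    qed measurable
    also have "\<dots> = (\<integral>u. (\<integral>v. (MAX a\<in>UNIV. \<bar>t1 a u - t2 a v\<bar>) \<partial>PiM I2 N) \<partial>PiM I1 N)"
      unfolding mg1 mg2 ..
    finally show ?thesis .
  qed
  show ?thesis using main unfolding g1 g2 .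
qed


lemma g_meas:
  fixes T :: "real ^ 'n \<Rightarrow> 'a::finite \<Rightarrow> (real ^ 'n) measure"
    and G :: "real ^ 'n \<Rightarrow> ('a \<times> nat \<times> nat \<Rightarrow> real ^ 'n) \<Rightarrow> real"
  assumes T_kernel: "\<And>a. (\<lambda>x. T x a) \<in> state_space X \<rightarrow>\<^sub>M prob_algebra (state_space X)"
    and Gm: "(\<lambda>(x, ys). G x ys) \<in> borel_measurable (state_space X \<Otimes>\<^sub>M PiM (UNIV \<times> {1, 2} \<times> {1..M}) (\<lambda>i. state_space X))"
    and Gnn: "\<And>x ys. 0 \<le> G x ys"
  shows "(\<lambda>x. \<integral>ys. G x ys \<partial>sample_law T M x) \<in> borel_measurable (state_space X)"
proof -
  define I where "I = (UNIV :: 'a set) \<times> {1::nat, 2} \<times> {1..M}"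
  have fin: "finite I" by (simp add: I_def)
  have P: "(\<lambda>x. sample_law T M x) \<in> state_space X \<rightarrow>\<^sub>M subprob_algebra (PiM I (\<lambda>i. state_space X))"
    unfolding sample_law_def I_def[symmetric]
    by (rule measurable_prob_algebraD[OF kernel_meas[OF T_kernel fin]])
  have Gm': "(\<lambda>(x, ys). G x ys) \<in> borel_measurable (state_space X \<Otimes>\<^sub>M PiM I (\<lambda>i. state_space X))"
    using Gm unfolding I_def .
  have "(\<lambda>x. enn2real (\<integral>\<^sup>+ys. ennreal (G x ys) \<partial>sample_law T M x)) \<in> borel_measurable (state_space X)"
  proof (rule borel_measurable_enn2real)
    show "(\<lambda>x. \<integral>\<^sup>+ys. ennreal (G x ys) \<partial>sample_law T M x) \<in> borel_measurable (state_space X)"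
    proof (rule nn_integral_measurable_subprob_algebra2[OF _ P])
      show "(\<lambda>(x, y). ennreal (G x y)) \<in> borel_measurable (state_space X \<Otimes>\<^sub>M PiM I (\<lambda>i. state_space X))"
        using Gm' by (simp add: case_prod_beta')
    qed
  qed
  then show ?thesis
  proof (rule measurable_cong[THEN iffD1, rotated])
    fix x assume x: "x \<in> space (state_space X)"
    have sx: "sets (sample_law T M x) = sets (PiM I (\<lambda>i. state_space X))"
      using subprob_measurableD(2)[OF P x] .
    have "G x \<in> borel_measurable (PiM I (\<lambda>i. state_space X))"
      using measurable_Pair2[OF Gm' x] by simp
    then have "G x \<in> borel_measurable (sample_law T M x)"
      using measurable_cong_sets[OF sx refl] by blast
    then show "enn2real (\<integral>\<^sup>+ys. ennreal (G x ys) \<partial>sample_law T M x) = (\<integral>ys. G x ys \<partial>sample_law T M x)"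
      using Gnn by (subst integral_eq_nn_integral) auto
  qed
qed


lemma int01:
  fixes f :: "_ \<Rightarrow> real"
  assumes "prob_space R" "\<And>y. 0 \<le> f y \<and> f y \<le> 1"
  shows "0 \<le> (\<integral>y. f y \<partial>R) \<and> (\<integral>y. f y \<partial>R) \<le> 1"
proof (cases "integrable R f")
  case True
  interpret prob_space R by fact
  have "(\<integral>y. f y \<partial>R) \<le> (\<integral>y. 1 \<partial>R)"
    using True assms(2) by (intro integral_mono) auto
  then show ?thesis using assms(2) by (auto intro: integral_nonneg simp: prob_space)
next
  case False
  then show ?thesis by (simp add: not_integrable_integral_eq)
qed

theorem mainTheorem7:
  fixes X A K :: "(real ^ 'n) set"
    and T :: "real ^ 'n \<Rightarrow> 'a::finite \<Rightarrow> (real ^ 'n) measure"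
    and \<eta> :: "(real ^ 'n) measure"
    and Wk Wk1 :: "real ^ 'n \<Rightarrow> real"
    and M :: nat
  assumes X_borel: "X \<in> sets borel"
    and A_meas: "A \<in> sets (state_space X)"
    and K_meas: "K \<in> sets (state_space X)"
    and T_kernel: "\<And>a. (\<lambda>x. T x a) \<in> state_space X \<rightarrow>\<^sub>M prob_algebra (state_space X)"
    and Wk_B: "Wk \<in> B1 X"
    and Wk1_B: "Wk1 \<in> B1 X"
    and eta_prob: "prob_space \<eta>"
    and eta_sets: "sets \<eta> = sets (state_space X)"
    and eta_supp: "emeasure \<eta> (A - K) = 1"
    and M_pos: "M \<ge> 1"
  shows "norm1 \<eta> A K (\<lambda>x. Wk x - bellman T A K Wk1 x)
     \<le> (\<integral>x. (\<integral>ys. \<bar>Wk x - (MAX a\<in>UNIV. emp_op M A K Wk1 ys 1 a)\<bar> \<partial>(sample_law T M x)) \<partial>\<eta>)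
      + (\<integral>x. (\<integral>ys. (MAX a\<in>UNIV. \<bar>emp_op M A K Wk1 ys 1 a - emp_op M A K Wk1 ys 2 a\<bar>)
             \<partial>(sample_law T M x)) \<partial>\<eta>)"
proof -
  interpret E: prob_space \<eta> by fact
  define I where "I = (UNIV :: 'a set) \<times> {1::nat, 2} \<times> {1..M}"
  define g1 where "g1 x = (\<integral>ys. \<bar>Wk x - (MAX a\<in>UNIV. emp_op M A K Wk1 ys 1 a)\<bar> \<partial>(sample_law T M x))" for x
  define g2 where "g2 x = (\<integral>ys. (MAX a\<in>UNIV. \<bar>emp_op M A K Wk1 ys 1 a - emp_op M A K Wk1 ys 2 a\<bar>)
             \<partial>(sample_law T M x))" for x
  have sp: "space \<eta> = X" using sets_eq_imp_space_eq[OF eta_sets] by (simp add: space_ss)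
  have AX: "A \<subseteq> X" using sets.sets_into_space[OF A_meas] by (simp add: space_ss)
  have Wb: "\<And>y. y \<in> X \<Longrightarrow> 0 \<le> Wk1 y \<and> Wk1 y \<le> 1" and Wm[measurable]: "Wk1 \<in> borel_measurable (state_space X)"
    using Wk1_B by (auto simp: B1_def)
  have Wkb: "\<And>y. y \<in> X \<Longrightarrow> 0 \<le> Wk y \<and> Wk y \<le> 1" and Wkm[measurable]: "Wk \<in> borel_measurable (state_space X)"
    using Wk_B by (auto simp: B1_def)
  have eb: "0 \<le> emp_op M A K Wk1 ys \<alpha> a \<and> emp_op M A K Wk1 ys \<alpha> a \<le> 1" for ys \<alpha> a
    by (rule emp_bounds[OF AX _ M_pos]) (use Wb in auto)
  have em[measurable]: "(\<lambda>ys. emp_op M A K Wk1 ys \<alpha> a) \<in> borel_measurable (PiM I (\<lambda>i. state_space X))"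
    if "\<alpha> \<in> {1, 2}" for \<alpha> a
    by (rule emp_meas[OF refl A_meas K_meas Wm]) (use that in \<open>auto simp: I_def\<close>)
  have emj[measurable]: "(\<lambda>x. emp_op M A K Wk1 (snd x) 1 a) \<in> borel_measurable (state_space X \<Otimes>\<^sub>M PiM (UNIV \<times> {1, 2} \<times> {1..M}) (\<lambda>i. state_space X))"
    "(\<lambda>x. emp_op M A K Wk1 (snd x) 2 a) \<in> borel_measurable (state_space X \<Otimes>\<^sub>M PiM (UNIV \<times> {1, 2} \<times> {1..M}) (\<lambda>i. state_space X))" for a :: 'a
    using measurable_compose[OF measurable_snd em[of 1 a]] measurable_compose[OF measurable_snd em[of 2 a]]
    by (auto simp: I_def)
  have g1m: "g1 \<in> borel_measurable \<eta>"
  proof -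
    have "g1 \<in> borel_measurable (state_space X)"
      unfolding g1_def
    proof (rule g_meas[OF T_kernel])
      show "(\<lambda>(x, ys). \<bar>Wk x - (MAX a\<in>UNIV. emp_op M A K Wk1 ys 1 a)\<bar>) \<in> borel_measurable (state_space X \<Otimes>\<^sub>M PiM ((UNIV :: 'a set) \<times> {1, 2} \<times> {1..M}) (\<lambda>i. state_space X))"
        by measurable
    qed auto
    then show ?thesis using measurable_cong_sets[OF eta_sets refl] by blast
  qed
  have g2m: "g2 \<in> borel_measurable \<eta>"
  proof -
    have "g2 \<in> borel_measurable (state_space X)"
      unfolding g2_def
    proof (rule g_meas[OF T_kernel])
      show "(\<lambda>(x, ys). (MAX a\<in>UNIV. \<bar>emp_op M A K Wk1 ys 1 a - emp_op M A K Wk1 ys 2 a\<bar>)) \<in> borel_measurable (state_space X \<Otimes>\<^sub>M PiM ((UNIV :: 'a set) \<times> {1, 2} \<times> {1..M}) (\<lambda>i. state_space X))"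
        by measurable
    qed (auto intro: Max_nonneg)
    then show ?thesis using measurable_cong_sets[OF eta_sets refl] by blast
  qed
  have slp: "prob_space (sample_law T M x)" if x: "x \<in> X" for x
  proof -
    have "sample_law T M x \<in> space (prob_algebra (PiM I (\<lambda>i. state_space X)))"
      unfolding sample_law_def I_def[symmetric]
      by (rule measurable_space[OF kernel_meas[OF T_kernel]]) (auto simp: I_def space_ss x)
    then show ?thesis by (simp add: space_prob_algebra)
  qed
  have g1b: "0 \<le> g1 x \<and> g1 x \<le> 1" if x: "x \<in> X" for x
    unfolding g1_def
  proof (rule int01[OF slp[OF x]])
    fix ys :: "'a \<times> nat \<times> nat \<Rightarrow> real ^ 'n"
    have "0 \<le> (MAX a\<in>UNIV. emp_op M A K Wk1 ys 1 a)" by (rule Max_nonneg) (rule conjunct1[OF eb])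
    moreover have "(MAX a\<in>UNIV. emp_op M A K Wk1 ys 1 a) \<le> 1" by (rule Max.boundedI) (auto intro: conjunct2[OF eb])
    ultimately show "0 \<le> \<bar>Wk x - (MAX a\<in>UNIV. emp_op M A K Wk1 ys 1 a)\<bar> \<and> \<bar>Wk x - (MAX a\<in>UNIV. emp_op M A K Wk1 ys 1 a)\<bar> \<le> 1"
      using Wkb[OF x] by linarith
  qed
  have g2b: "0 \<le> g2 x \<and> g2 x \<le> 1" if x: "x \<in> X" for x
    unfolding g2_def
  proof (rule int01[OF slp[OF x]])
    fix ys :: "'a \<times> nat \<times> nat \<Rightarrow> real ^ 'n"
    have d: "\<bar>emp_op M A K Wk1 ys 1 a - emp_op M A K Wk1 ys 2 a\<bar> \<le> 1" for a
      using eb[of ys 1 a] eb[of ys 2 a] by (auto simp: abs_le_iff)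
    have "0 \<le> (MAX a\<in>UNIV. \<bar>emp_op M A K Wk1 ys 1 a - emp_op M A K Wk1 ys 2 a\<bar>)" by (rule Max_nonneg) auto
    moreover have "(MAX a\<in>UNIV. \<bar>emp_op M A K Wk1 ys 1 a - emp_op M A K Wk1 ys 2 a\<bar>) \<le> 1"
      by (rule Max.boundedI) (use d in auto)
    ultimately show "0 \<le> (MAX a\<in>UNIV. \<bar>emp_op M A K Wk1 ys 1 a - emp_op M A K Wk1 ys 2 a\<bar>) \<and> (MAX a\<in>UNIV. \<bar>emp_op M A K Wk1 ys 1 a - emp_op M A K Wk1 ys 2 a\<bar>) \<le> 1"
      by simp
  qed
  have int1: "integrable \<eta> g1"
  proof (rule E.integrable_const_bound[where B=1, OF _ g1m])
    show "AE x in \<eta>. norm (g1 x) \<le> 1" using AE_space[of \<eta>]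
      by eventually_elim (use g1b sp in auto)
  qed
  have int2: "integrable \<eta> g2"
  proof (rule E.integrable_const_bound[where B=1, OF _ g2m])
    show "AE x in \<eta>. norm (g2 x) \<le> 1" using AE_space[of \<eta>]
      by eventually_elim (use g2b sp in auto)
  qed
  have pw: "\<bar>Wk x - bellman T A K Wk1 x\<bar> \<le> g1 x + g2 x" if x: "x \<in> X" for x
    unfolding g1_def g2_def by (rule ptwise[OF A_meas K_meas T_kernel Wk1_B M_pos x])
  have "norm1 \<eta> A K (\<lambda>x. Wk x - bellman T A K Wk1 x) = (\<integral>x. indicator (A - K) x * \<bar>Wk x - bellman T A K Wk1 x\<bar> \<partial>\<eta>)"
    unfolding norm1_def set_lebesgue_integral_def by simp
  also have "\<dots> \<le> (\<integral>x. g1 x + g2 x \<partial>\<eta>)"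
  proof (cases "integrable \<eta> (\<lambda>x. indicator (A - K) x * \<bar>Wk x - bellman T A K Wk1 x\<bar>)")
    case True
    show ?thesis
    proof (rule integral_mono[OF True])
      show "integrable \<eta> (\<lambda>x. g1 x + g2 x)" using int1 int2 by simp
      fix x assume "x \<in> space \<eta>"
      then have x: "x \<in> X" by (simp add: sp)
      show "indicator (A - K) x * \<bar>Wk x - bellman T A K Wk1 x\<bar> \<le> g1 x + g2 x"
        using pw[OF x] g1b[OF x] g2b[OF x] by (auto simp: indicator_def)
    qed
  next
    case False
    then have "(\<integral>x. indicator (A - K) x * \<bar>Wk x - bellman T A K Wk1 x\<bar> \<partial>\<eta>) = 0"
      by (simp add: not_integrable_integral_eq)
    also have "0 \<le> (\<integral>x. g1 x + g2 x \<partial>\<eta>)"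
      using g1b g2b sp by (intro Bochner_Integration.integral_nonneg) fastforce
    finally show ?thesis .
  qed
  also have "\<dots> = (\<integral>x. g1 x \<partial>\<eta>) + (\<integral>x. g2 x \<partial>\<eta>)"
    using Bochner_Integration.integral_add[OF int1 int2] by simp
  finally show ?thesis unfolding g1_def g2_def .
qed

end
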